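(* Let $f:\mathbb{N}^d\to\mathbb{N}$ satisfy: (i) $f$ is nondecreasing; (ii) there exist quilt-affine $g_1,\ldots,g_m:\mathbb{N}^d\to\mathbb{Z}$ and $\vec{n}\in\mathbb{N}^d$ such that $f(\vec{x})=\min_k g_k(\vec{x})$ for all $\vec{x}\ge\vec{n}$ componentwise; (iii) for every $i\in\{1,\ldots,d\}$ and $j\in\mathbb{N}$, the fixed-input restriction $f_{[\vec{x}(i)\to j]}$ is obliviously-computable. Then $f$ is obliviously-computable.
   Context: A chemical reaction network (CRN) is a pair $(\mathcal{S},\mathcal{R})$ of a finite set of species and a finite set of reactions $(\vec{R},\vec{P})\in\mathbb{N}^{\mathcal{S}}\times\mathbb{N}^{\mathcal{S}}$. A configuration is $\vec{C}\in\mathbb{N}^{\mathcal{S}}$; a reaction is applicable if $\vec{R}\le\vec{C}$ and yields $\vec{C}-\vec{R}+\vec{P}$; reachability is via finite sequences of applicable reactions. To compute $f:\mathbb{N}^d\to\mathbb{N}$ the CRN has input species $X_1,\ldots,X_d$, output species $Y$, leader species $L$; the initial configuration $\vec{I}_{\vec{x}}$ has $\vec{x}(i)$ copies of $X_i$, one $L$, nothing else. $\vec{C}$ is stable if all configurations reachable from it have the same count of $Y$. The CRN stably computes $f$ if for every $\vec{x}$ and every $\vec{C}$ reachable from $\vec{I}_{\vec{x}}$ some stable $\vec{O}$ reachable from $\vec{C}$ has $\vec{O}(Y)=f(\vec{x})$. The CRN is output-oblivious if $Y$ is never a reactant; $f$ is obliviously-computable if stably computed by an output-oblivious CRN. A function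 $g:\mathbb{N}^d\to\mathbb{Z}$ is quilt-affine if it is nondecreasing and there exist $p\in\mathbb{N}_+$, $\vec{\nabla}\in\mathbb{Q}^d_{\ge0}$, $B:\mathbb{Z}^d/p\mathbb{Z}^d\to\mathbb{Q}$ with $g(\vec{x})=\vec{\nabla}\cdot\vec{x}+B(\vec{x}\bmod p)$. The fixed-input restriction is $f_{[\vec{x}(i)\to j]}(\vec{x})=f(\vec{x}(1),\ldots,\vec{x}(i-1),j,\vec{x}(i+1),\ldots,\vec{x}(d))$. *)

theory Defs
  imports Complex_Main
begin

text \<open>Species are natural numbers (any finite species set can be renamed into nat).
  Vectors in N^d are lists of length d (0-based coordinates).\<close>

type_synonym config = "nat \<Rightarrow> nat"
type_synonym reaction = "config \<times> config"

definition supported_in :: "nat set \<Rightarrow> config \<Rightarrow> bool" where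
  "supported_in S C \<longleftrightarrow> (\<forall>s. s \<notin> S \<longrightarrow> C s = 0)"

definition applicable :: "reaction \<Rightarrow> config \<Rightarrow> bool" where
  "applicable r C \<longleftrightarrow> (\<forall>s. fst r s \<le> C s)"

definition apply_rxn :: "reaction \<Rightarrow> config \<Rightarrow> config" where
  "apply_rxn r C = (\<lambda>s. C s - fst r s + snd r s)"

definition step :: "reaction set \<Rightarrow> config \<Rightarrow> config \<Rightarrow> bool" where
  "step Rs C D \<longleftrightarrow> (\<exists>r\<in>Rs. applicable r C \<and> D = apply_rxn r C)"

definition reachable :: "reaction set \<Rightarrow> config \<Rightarrow> config \<Rightarrow> bool" where
  "reachable Rs = (step Rs)\<^sup>*\<^sup>*"

definition stable :: "reaction set \<Rightarrow> nat \<Rightarrow> config \<Rightarrow> bool" where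
  "stable Rs Y C \<longleftrightarrow> (\<forall>D. reachable Rs C D \<longrightarrow> D Y = C Y)"

definition initial_config :: "nat \<Rightarrow> (nat \<Rightarrow> nat) \<Rightarrow> nat \<Rightarrow> nat list \<Rightarrow> config" where
  "initial_config d X L x = (\<lambda>s. (if s = L then 1 else 0) + (\<Sum>i<d. if X i = s then x ! i else 0))"

definition stably_computes ::
  "nat set \<Rightarrow> reaction set \<Rightarrow> nat \<Rightarrow> (nat \<Rightarrow> nat) \<Rightarrow> nat \<Rightarrow> nat \<Rightarrow> (nat list \<Rightarrow> nat) \<Rightarrow> bool" where
  "stably_computes S Rs d X Y L f \<longleftrightarrow>
     finite S \<and> finite Rs \<and>
     (\<forall>r\<in>Rs. supported_in S (fst r) \<and> supported_in S (snd r)) \<and>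
     (\<forall>i<d. X i \<in> S) \<and> inj_on X {..<d} \<and> Y \<in> S \<and> L \<in> S \<and> Y \<noteq> L \<and>
     Y \<notin> X ` {..<d} \<and> L \<notin> X ` {..<d} \<and>
     (\<forall>x. length x = d \<longrightarrow>
        (\<forall>C. reachable Rs (initial_config d X L x) C \<longrightarrow>
           (\<exists>Cf. reachable Rs C Cf \<and> stable Rs Y Cf \<and> Cf Y = f x)))"

definition output_oblivious :: "reaction set \<Rightarrow> nat \<Rightarrow> bool" where
  "output_oblivious Rs Y \<longleftrightarrow> (\<forall>r\<in>Rs. fst r Y = 0)"

definition obliviously_computable :: "nat \<Rightarrow> (nat list \<Rightarrow> nat) \<Rightarrow> bool" where
  "obliviously_computable d f \<longleftrightarrow>
     (\<exists>S Rs X Y L. stably_computes S Rs d X Y L f \<and> output_oblivious Rs Y)"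

definition vle :: "nat list \<Rightarrow> nat list \<Rightarrow> bool" where
  "vle x y \<longleftrightarrow> list_all2 (\<le>) x y"

definition nondecreasing :: "nat \<Rightarrow> (nat list \<Rightarrow> 'a::order) \<Rightarrow> bool" where
  "nondecreasing d f \<longleftrightarrow>
     (\<forall>x y. length x = d \<longrightarrow> length y = d \<longrightarrow> vle x y \<longrightarrow> f x \<le> f y)"

text \<open>Quilt-affine: nondecreasing, and g x = grad . x + B (x mod p) with p > 0,
  grad \<in> Q^d_{\<ge>0}, B defined on residue vectors (represented by lists with entries < p).\<close>
definition quilt_affine :: "nat \<Rightarrow> (nat list \<Rightarrow> int) \<Rightarrow> bool" where
  "quilt_affine d g \<longleftrightarrow> nondecreasing d g \<and>
     (\<exists>p::nat. \<exists>grad::rat list. \<exists>B::nat list \<Rightarrow> rat.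
        p > 0 \<and> length grad = d \<and> (\<forall>q\<in>set grad. q \<ge> 0) \<and>
        (\<forall>x. length x = d \<longrightarrow>
           of_int (g x) = (\<Sum>i<d. grad ! i * of_nat (x ! i)) + B (map (\<lambda>v. v mod p) x)))"

definition fix_input :: "(nat list \<Rightarrow> nat) \<Rightarrow> nat \<Rightarrow> nat \<Rightarrow> nat list \<Rightarrow> nat" where
  "fix_input f i j = (\<lambda>x. f (x[i := j]))"

end

theory Submission
  imports Defs "HOL-Library.Countable"
begin

datatype sp = Xin nat | Yo | Ld | Xc nat | Yk nat | Mst "nat list" | Sub "nat \<times> nat" nat

instance sp :: countable by countable_datatype

definition liftc :: "(sp \<Rightarrow> nat) \<Rightarrow> config" where
  "liftc F = (\<lambda>z. if z \<in> range (to_nat::sp\<Rightarrow>nat) then F (from_nat z) else 0)"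

lemma liftc_to_nat[simp]: "liftc F (to_nat s) = F s"
  by (simp add: liftc_def)

definition liftr :: "(sp \<Rightarrow> nat) \<times> (sp \<Rightarrow> nat) \<Rightarrow> reaction" where
  "liftr r = (liftc (fst r), liftc (snd r))"

definition appl :: "(sp \<Rightarrow> nat) \<times> (sp \<Rightarrow> nat) \<Rightarrow> (sp \<Rightarrow> nat) \<Rightarrow> bool" where
  "appl r C \<longleftrightarrow> (\<forall>s. fst r s \<le> C s)"

definition app :: "(sp \<Rightarrow> nat) \<times> (sp \<Rightarrow> nat) \<Rightarrow> (sp \<Rightarrow> nat) \<Rightarrow> (sp \<Rightarrow> nat)" where
  "app r C = (\<lambda>s. C s - fst r s + snd r s)"

lemma applicable_liftr: "applicable (liftr r) (liftc C) \<longleftrightarrow> appl r C"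
  unfolding applicable_def appl_def liftr_def
  apply (auto simp: liftc_def)
  by (metis from_nat_to_nat rangeI)

lemma apply_liftr: "apply_rxn (liftr r) (liftc C) = liftc (app r C)"
  unfolding apply_rxn_def app_def liftr_def
  by (auto simp: liftc_def)

lemma step_liftI: "r \<in> Rsp \<Longrightarrow> appl r C \<Longrightarrow> step (liftr ` Rsp) (liftc C) (liftc (app r C))"
  unfolding step_def
proof (rule bexI[of _ "liftr r"])
  assume "appl r C" "r \<in> Rsp"
  then show "applicable (liftr r) (liftc C) \<and> liftc (app r C) = apply_rxn (liftr r) (liftc C)"
    by (simp add: applicable_liftr apply_liftr)
qed (rule imageI)

lemma reach_step: "reachable Rs C D \<Longrightarrow> step Rs D E \<Longrightarrow> reachable Rs C E"
  unfolding reachable_def by (rule rtranclp.rtrancl_into_rtrancl)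

lemma reach_refl: "reachable Rs C C"
  unfolding reachable_def by simp

lemma reach_trans: "reachable Rs C D \<Longrightarrow> reachable Rs D E \<Longrightarrow> reachable Rs C E"
  unfolding reachable_def by (rule rtranclp_trans)

lemma oblivious_mono:
  assumes "output_oblivious Rs Y" "reachable Rs C D"
  shows "C Y \<le> D Y"
  using assms(2) unfolding reachable_def
proof (induction rule: rtranclp_induct)
  case base then show ?case by simp
next
  case (step D E)
  then obtain r where "r \<in> Rs" "E = apply_rxn r D" unfolding step_def by blast
  with assms(1) have "E Y = D Y + snd r Y" unfolding output_oblivious_def apply_rxn_def by auto
  with step show ?case by simp
qed

lemma oblivious_bound:
  assumes "stably_computes S Rs d X Y L h" "output_oblivious Rs Y" "length x = d"
    "reachable Rs (initial_config d X L x) D"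
  shows "D Y \<le> h x"
proof -
  from assms(1,3,4) obtain Cf where "reachable Rs D Cf" "Cf Y = h x"
    unfolding stably_computes_def by blast
  with oblivious_mono[OF assms(2)] show ?thesis by metis
qed

locale L15 =
  fixes d :: nat and f :: "nat list \<Rightarrow> nat" and gs :: "(nat list \<Rightarrow> int) list"
    and n :: "nat list" and P :: nat
    and SS :: "nat \<times> nat \<Rightarrow> nat set" and RR :: "nat \<times> nat \<Rightarrow> reaction set"
    and XX :: "nat \<times> nat \<Rightarrow> nat \<Rightarrow> nat" and YY LL :: "nat \<times> nat \<Rightarrow> nat"
  assumes len_n: "length n = d" and gs_ne: "gs \<noteq> []"
    and gmono: "\<And>g. g \<in> set gs \<Longrightarrow> nondecreasing d g"
    and per: "\<And>g u v i. g \<in> set gs \<Longrightarrow> length u = d \<Longrightarrow> length v = d \<Longrightarrow>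
         (\<forall>i<d. u!i mod P = v!i mod P) \<Longrightarrow> i < d \<Longrightarrow>
         g (u[i := u!i+1]) - g u = g (v[i := v!i+1]) - g v"
    and fmin: "\<And>x. length x = d \<Longrightarrow> vle n x \<Longrightarrow> int (f x) = Min ((\<lambda>g. g x) ` set gs)"
    and fmono: "nondecreasing d f" and Ppos: "P > 0"
    and subs: "\<And>i j. i < d \<Longrightarrow> j < n!i \<Longrightarrow>
        stably_computes (SS (i,j)) (RR (i,j)) d (XX (i,j)) (YY (i,j)) (LL (i,j)) (fix_input f i j)
        \<and> output_oblivious (RR (i,j)) (YY (i,j))"
begin

abbreviation "K \<equiv> length gs"
abbreviation "g k \<equiv> gs ! k"

definition "T = {(i,j). i < d \<and> j < n!i}"
definition "maxv q = map (\<lambda>i. max (q!i) (n!i)) [0..<d]"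
definition "st q = map (\<lambda>i. if q!i < n!i then q!i else n!i + (q!i - n!i) mod P) [0..<d]"
definition "stepw w i = w[i := (if w!i + 1 < n!i + P then w!i + 1 else n!i)]"
definition "Wset = {w. length w = d \<and> (\<forall>i<d. w!i < n!i + P)}"
definition out :: "nat \<Rightarrow> nat list \<Rightarrow> nat \<Rightarrow> nat" where "out k w i = (if n!i \<le> w!i then nat (g k ((maxv w)[i := maxv w ! i + 1]) - g k (maxv w)) else 0)"
definition "act q t \<longleftrightarrow> q ! fst t \<le> snd t"
definition "h t = fix_input f (fst t) (snd t)"

definition rstart :: "(sp \<Rightarrow> nat) \<times> (sp \<Rightarrow> nat)" where "rstart = (\<lambda>s. if s = Ld then 1 else 0,
   \<lambda>s. case s of Mst w \<Rightarrow> if w = st (replicate d 0) then 1 else 0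
     | Sub t s' \<Rightarrow> if t \<in> T \<and> s' = LL t then 1 else 0
     | Yk k \<Rightarrow> if k < K then nat (g k n) else 0 | _ \<Rightarrow> 0)"
definition rdup :: "nat \<Rightarrow> (sp \<Rightarrow> nat) \<times> (sp \<Rightarrow> nat)" where "rdup i = (\<lambda>s. if s = Xin i then 1 else 0,
   \<lambda>s. case s of Xc i' \<Rightarrow> if i' = i then 1 else 0
     | Sub t s' \<Rightarrow> if t \<in> T \<and> s' = XX t i then 1 else 0 | _ \<Rightarrow> 0)"
definition rstep :: "nat list \<Rightarrow> nat \<Rightarrow> (sp \<Rightarrow> nat) \<times> (sp \<Rightarrow> nat)" where "rstep w i = (\<lambda>s. if s = Mst w \<or> s = Xc i then 1 else 0,
   \<lambda>s. case s of Mst w' \<Rightarrow> if w' = stepw w i then 1 else 0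
     | Yk k \<Rightarrow> if k < K then out k w i else 0 | _ \<Rightarrow> 0)"
definition rmin :: "nat list \<Rightarrow> (sp \<Rightarrow> nat) \<times> (sp \<Rightarrow> nat)" where "rmin w = (\<lambda>s. case s of Mst w' \<Rightarrow> if w' = w then 1 else 0
     | Yk k \<Rightarrow> if k < K then 1 else 0
     | Sub t s' \<Rightarrow> if t \<in> T \<and> act w t \<and> s' = YY t then 1 else 0 | _ \<Rightarrow> 0,
   \<lambda>s. if s = Mst w \<or> s = Yo then 1 else 0)"
definition rsub :: "nat \<times> nat \<Rightarrow> reaction \<Rightarrow> (sp \<Rightarrow> nat) \<times> (sp \<Rightarrow> nat)" where "rsub t r = (\<lambda>s. case s of Sub t' s' \<Rightarrow> if t' = t then fst r s' else 0 | _ \<Rightarrow> 0,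
   \<lambda>s. case s of Sub t' s' \<Rightarrow> if t' = t then snd r s' else 0 | _ \<Rightarrow> 0)"
definition "Rsp = {rstart} \<union> rdup ` {..<d} \<union> (\<lambda>(w,i). rstep w i) ` (Wset \<times> {..<d})
   \<union> rmin ` Wset \<union> (\<Union>t\<in>T. rsub t ` RR t)"

definition cfg :: "nat list \<Rightarrow> nat list \<Rightarrow> bool \<Rightarrow> nat list \<Rightarrow> nat \<Rightarrow> (nat \<times> nat \<Rightarrow> nat \<Rightarrow> nat) \<Rightarrow> sp \<Rightarrow> nat" where "cfg x a b q m E = (\<lambda>s. case s of Xin i \<Rightarrow> if i < d then a!i else 0
   | Yo \<Rightarrow> m | Ld \<Rightarrow> if b then 0 else 1
   | Xc i \<Rightarrow> if i < d then x!i - a!i - q!i else 0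
   | Yk k \<Rightarrow> if b \<and> k < K then nat (g k (maxv q)) - m else 0
   | Mst w \<Rightarrow> if b \<and> w = st q then 1 else 0
   | Sub t s' \<Rightarrow> if t \<in> T then E t s' else 0)"

definition corr :: "nat \<times> nat \<Rightarrow> nat list \<Rightarrow> bool \<Rightarrow> nat \<Rightarrow> nat" where "corr t a b s = (\<Sum>i<d. if XX t i = s then a!i else 0) + (if s = LL t \<and> \<not> b then 1 else 0)"

definition "good x a b q m E \<longleftrightarrow> length a = d \<and> length q = d \<and> (\<forall>i<d. a!i + q!i \<le> x!i)
   \<and> (\<not> b \<longrightarrow> m = 0 \<and> q = replicate d 0) \<and> (b \<longrightarrow> (\<forall>k<K. m \<le> nat (g k (maxv q))))
   \<and> (\<forall>t\<in>T. \<exists>D. reachable (RR t) (initial_config d (XX t) (LL t) x) D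
        \<and> (\<forall>s. s \<noteq> YY t \<longrightarrow> D s = E t s + corr t a b s)
        \<and> (act q t \<longrightarrow> D (YY t) = E t (YY t) + m))"

lemma subsT: "t \<in> T \<Longrightarrow> stably_computes (SS t) (RR t) d (XX t) (YY t) (LL t) (h t) \<and> output_oblivious (RR t) (YY t)"
  using subs by (cases t) (auto simp: T_def h_def)

lemma subsT_facts:
  assumes "t \<in> T"
  shows "inj_on (XX t) {..<d}" "YY t \<noteq> LL t" "YY t \<notin> XX t ` {..<d}" "LL t \<notin> XX t ` {..<d}"
    "\<And>r. r \<in> RR t \<Longrightarrow> fst r (YY t) = 0"
  using subsT[OF assms] unfolding stably_computes_def output_oblivious_def by auto

lemma corr_Y: "t \<in> T \<Longrightarrow> corr t a b (YY t) = 0"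
  using subsT_facts[of t] unfolding corr_def by (auto intro!: sum.neutral) (metis image_eqI lessThan_iff)

lemma maxv_zero: "maxv (replicate d 0) = n"
  unfolding maxv_def using len_n by (auto intro!: nth_equalityI)

lemma vle_iff: "vle u v \<longleftrightarrow> length u = length v \<and> (\<forall>i<length u. u!i \<le> v!i)"
  unfolding vle_def list_all2_conv_all_nth by simp

lemma vle_upd: "i < length v \<Longrightarrow> v!i \<le> j \<Longrightarrow> vle v (v[i:=j])"
  unfolding vle_iff by (auto simp: nth_list_update)

lemma vle_trans: "vle u v \<Longrightarrow> vle v w \<Longrightarrow> vle u w"
  unfolding vle_iff by (metis order_trans)

lemma length_st[simp]: "length (st q) = d" by (simp add: st_def)
lemma nth_st: "i < d \<Longrightarrow> st q ! i = (if q!i < n!i then q!i else n!i + (q!i - n!i) mod P)"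
  by (simp add: st_def)
lemma length_maxv[simp]: "length (maxv q) = d" by (simp add: maxv_def)
lemma nth_maxv: "i < d \<Longrightarrow> maxv q ! i = max (q!i) (n!i)"
  by (simp add: maxv_def)

lemma st_W: "st q \<in> Wset"
  unfolding Wset_def using Ppos by (auto simp: nth_st)

lemma stepw_W: "w \<in> Wset \<Longrightarrow> stepw w i \<in> Wset"
  unfolding Wset_def stepw_def using Ppos by (cases "i < length w") (auto simp: nth_list_update)

lemma stepw_st:
  assumes "length q = d" "i < d"
  shows "stepw (st q) i = st (q[i := q!i+1])"
proof (rule nth_equalityI)
  show "length (stepw (st q) i) = length (st (q[i := q!i+1]))" by (simp add: stepw_def)
next
  fix k assume "k < length (stepw (st q) i)"
  then have k: "k < d" by (simp add: stepw_def)
  show "stepw (st q) i ! k = st (q[i := q!i+1]) ! k"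
  proof (cases "k = i")
    case False
    then show ?thesis using k assms by (simp add: stepw_def nth_st nth_list_update)
  next
    case True
    have A: "Suc ((q!i - n!i) mod P) < P \<Longrightarrow> (Suc (q!i) - n!i) mod P = Suc ((q!i - n!i) mod P)"
      if "n!i \<le> q!i"
      using that by (simp add: Suc_diff_le mod_Suc)
    have B: "\<not> Suc ((q!i - n!i) mod P) < P \<Longrightarrow> (Suc (q!i) - n!i) mod P = 0"
      if "n!i \<le> q!i"
      using that Ppos mod_less_divisor[OF Ppos, of "q!i - n!i"] by (simp add: Suc_diff_le mod_Suc)
    show ?thesis using True k assms A B by (auto simp: stepw_def nth_st nth_list_update)
  qed
qed

lemma act_st: "t \<in> T \<Longrightarrow> act (st q) t \<longleftrightarrow> act q t"
  unfolding act_def T_def by (auto simp: nth_st split: if_splits)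

lemma maxv_st_mod: "i < d \<Longrightarrow> maxv (st q) ! i mod P = maxv q ! i mod P"
  by (auto simp: nth_maxv nth_st mod_add_right_eq)

lemma vle_maxv: "vle n (maxv q)"
  unfolding vle_iff using len_n by (auto simp: nth_maxv)

lemma vle_maxv_mono: assumes "vle q x" "length q = d" shows "vle (maxv q) (maxv x)"
proof -
  have "\<forall>i<d. q!i \<le> x!i" using assms by (simp add: vle_iff)
  then show ?thesis unfolding vle_iff by (simp add: nth_maxv le_max_iff_disj) (meson nat_le_linear order_trans)
qed

lemma maxv_id: assumes "vle n q" shows "maxv q = q"
proof -
  have L: "length q = d" using assms len_n by (simp add: vle_iff)
  have "\<forall>i<d. n!i \<le> q!i" using assms len_n by (simp add: vle_iff)
  then show ?thesis by (intro nth_equalityI) (simp_all add: L nth_maxv)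
qed

lemma maxv_Suc1: assumes "length q = d" "i < d" "q!i < n!i" shows "maxv (q[i:=Suc (q!i)]) = maxv q"
proof (intro nth_equalityI)
  fix j assume "j < length (maxv (q[i := Suc (q ! i)]))"
  then have "j < d" by simp
  then show "maxv (q[i := Suc (q ! i)]) ! j = maxv q ! j"
    using assms by (cases "i = j") (simp_all add: nth_maxv nth_list_update)
qed simp

lemma maxv_Suc2: assumes "length q = d" "i < d" "n!i \<le> q!i"
  shows "maxv (q[i:=Suc (q!i)]) = (maxv q)[i := Suc (maxv q ! i)]"
proof (intro nth_equalityI)
  fix j assume "j < length (maxv (q[i := Suc (q ! i)]))"
  then have "j < d" by simp
  then show "maxv (q[i := Suc (q ! i)]) ! j = (maxv q)[i := Suc (maxv q ! i)] ! j"
    using assms by (cases "i = j") (simp_all add: nth_maxv nth_list_update)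
qed simp

lemma g_in: "k < K \<Longrightarrow> g k \<in> set gs" by simp

lemma g_mono: "k < K \<Longrightarrow> vle u v \<Longrightarrow> length u = d \<Longrightarrow> g k u \<le> g k v"
  using gmono[OF g_in] unfolding nondecreasing_def vle_iff by auto

lemma f_mono: "vle u v \<Longrightarrow> length u = d \<Longrightarrow> f u \<le> f v"
  using fmono unfolding nondecreasing_def vle_iff by auto

lemma g_ge_f: "k < K \<Longrightarrow> length u = d \<Longrightarrow> vle n u \<Longrightarrow> int (f u) \<le> g k u"
  using fmin[of u] by (simp add: Min_le)

lemma f_attained: "length u = d \<Longrightarrow> vle n u \<Longrightarrow> \<exists>k<K. g k u = int (f u)"
proof -
  assume "length u = d" "vle n u"
  then have "int (f u) = Min ((\<lambda>g. g u) ` set gs)" by (rule fmin)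
  moreover have "Min ((\<lambda>g. g u) ` set gs) \<in> (\<lambda>g. g u) ` set gs"
    using gs_ne by (intro Min_in) auto
  ultimately obtain gg where "gg \<in> set gs" "gg u = int (f u)" by auto
  then show ?thesis by (metis in_set_conv_nth)
qed

lemma out_eq:
  assumes "length q = d" "i < d" "k < K"
  shows "g k (maxv (q[i:=Suc (q!i)])) = g k (maxv q) + int (out k (st q) i)"
proof (cases "q!i < n!i")
  case True
  then show ?thesis using assms by (simp add: maxv_Suc1 out_def nth_st)
next
  case False
  let ?u = "maxv q" and ?v = "maxv (st q)"
  have "g k (?u[i:=?u!i+1]) - g k ?u = g k (?v[i:=?v!i+1]) - g k ?v"
    using per[OF g_in[OF assms(3)], of ?u ?v i] assms maxv_st_mod by auto
  moreover have "g k ?v \<le> g k (?v[i:=?v!i+1])"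
    using g_mono[OF assms(3) vle_upd] assms by simp
  moreover have "n!i \<le> st q ! i" using False assms by (simp add: nth_st)
  ultimately show ?thesis using False assms by (simp add: maxv_Suc2 out_def)
qed

lemma good_len: "good x a b q m E \<Longrightarrow> length a = d \<and> length q = d"
  by (simp add: good_def)

lemma g_nonneg: "k < K \<Longrightarrow> 0 \<le> g k (maxv q)"
proof -
  assume k: "k < K"
  have "int (f (maxv q)) \<le> g k (maxv q)" using g_ge_f[OF k _ vle_maxv] by simp
  then show ?thesis by linarith
qed

lemma start_appl: "appl rstart (cfg x a b q m E) \<longleftrightarrow> \<not> b"
proof
  assume "appl rstart (cfg x a b q m E)"
  then have "fst rstart Ld \<le> cfg x a b q m E Ld" unfolding appl_def by blast
  then show "\<not> b" by (simp add: rstart_def cfg_def split: if_splits)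
next
  assume "\<not> b"
  show "appl rstart (cfg x a b q m E)" unfolding appl_def
  proof
    fix s show "fst rstart s \<le> cfg x a b q m E s"
      using \<open>\<not> b\<close> by (cases s) (simp_all add: rstart_def cfg_def)
  qed
qed

lemma start_app:
  assumes "good x a False q m E"
  shows "app rstart (cfg x a False q m E) = cfg x a True q m (\<lambda>t s. E t s + (if s = LL t then 1 else 0))"
proof -
  have q: "q = replicate d 0" and m: "m = 0" using assms by (simp_all add: good_def)
  show ?thesis
  proof
    fix s show "app rstart (cfg x a False q m E) s = cfg x a True q m (\<lambda>t s. E t s + (if s = LL t then 1 else 0)) s"
      by (cases s) (simp_all add: app_def rstart_def cfg_def q m maxv_zero)
  qed
qed

lemma start_good:
  assumes "good x a False q m E"
  shows "good x a True q m (\<lambda>t s. E t s + (if s = LL t then 1 else 0))"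
proof -
  have q: "q = replicate d 0" and m: "m = 0" using assms by (simp_all add: good_def)
  have "\<exists>D. reachable (RR t) (initial_config d (XX t) (LL t) x) D
        \<and> (\<forall>s. s \<noteq> YY t \<longrightarrow> D s = (E t s + (if s = LL t then 1 else 0)) + corr t a True s)
        \<and> (act q t \<longrightarrow> D (YY t) = (E t (YY t) + (if YY t = LL t then 1 else 0)) + m)" if t: "t \<in> T" for t
  proof -
    obtain D where D: "reachable (RR t) (initial_config d (XX t) (LL t) x) D"
        "\<forall>s. s \<noteq> YY t \<longrightarrow> D s = E t s + corr t a False s"
        "act q t \<longrightarrow> D (YY t) = E t (YY t) + m"
      using assms t unfolding good_def by blast
    have "YY t \<noteq> LL t" using subsT_facts[OF t] by simp
    then show ?thesis using D by (intro exI[of _ D]) (auto simp: corr_def)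
  qed
  moreover have le: "\<forall>i<d. a!i + q!i \<le> x!i" "length a = d" "length q = d" using assms unfolding good_def by blast+
  moreover have "\<forall>i<d. a!i \<le> x!i" using le(1) unfolding q by simp
  ultimately show ?thesis unfolding good_def by (simp add: m q)
qed

lemma dup_appl:
  assumes i: "i < d"
  shows "appl (rdup i) (cfg x a b q m E) \<longleftrightarrow> 0 < a!i"
proof
  assume A: "appl (rdup i) (cfg x a b q m E)"
  have "fst (rdup i) (Xin i) \<le> cfg x a b q m E (Xin i)" using A unfolding appl_def by (rule spec)
  then show "0 < a!i" using i by (simp add: rdup_def cfg_def)
next
  assume "0 < a!i"
  show "appl (rdup i) (cfg x a b q m E)" unfolding appl_def
  proof
    fix s show "fst (rdup i) s \<le> cfg x a b q m E s"
      using i \<open>0 < a!i\<close> by (cases s) (simp_all add: rdup_def cfg_def)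
  qed
qed

lemma dup_app:
  assumes "good x a b q m E" "i < d" "0 < a!i"
  shows "app (rdup i) (cfg x a b q m E) = cfg x (a[i := a!i - 1]) b q m (\<lambda>t s. E t s + (if s = XX t i then 1 else 0))"
proof -
  have le: "a!i + q!i \<le> x!i" and la: "length a = d" using assms by (simp_all add: good_def)
  show ?thesis
  proof
    fix s show "app (rdup i) (cfg x a b q m E) s = cfg x (a[i := a!i - 1]) b q m (\<lambda>t s. E t s + (if s = XX t i then 1 else 0)) s"
    proof (cases s)
      case (Xin j) then show ?thesis using assms la by (cases "j = i") (simp_all add: app_def rdup_def cfg_def)
    next
      case (Xc j) then show ?thesis using assms la le by (cases "j = i") (simp_all add: app_def rdup_def cfg_def)
    qed (simp_all add: app_def rdup_def cfg_def)
  qed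
qed

lemma corr_dup:
  assumes "t \<in> T" "i < d" "0 < a!i" "length a = d"
  shows "corr t (a[i := a!i - 1]) b s + (if s = XX t i then 1 else 0) = corr t a b s"
proof -
  let ?F = "\<lambda>a' j. if XX t j = s then a'!j else 0"
  have inj: "inj_on (XX t) {..<d}" using subsT_facts[OF assms(1)] by simp
  have "(\<Sum>j<d. ?F (a[i := a!i - 1]) j) = ?F (a[i := a!i - 1]) i + (\<Sum>j\<in>{..<d}-{i}. ?F (a[i := a!i - 1]) j)"
    using assms(2) by (simp add: sum.remove)
  also have "(\<Sum>j\<in>{..<d}-{i}. ?F (a[i := a!i - 1]) j) = (\<Sum>j\<in>{..<d}-{i}. ?F a j)"
    by (rule sum.cong) auto
  finally have A: "(\<Sum>j<d. ?F (a[i := a!i - 1]) j) = ?F (a[i := a!i - 1]) i + (\<Sum>j\<in>{..<d}-{i}. ?F a j)" .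
  have B: "(\<Sum>j<d. ?F a j) = ?F a i + (\<Sum>j\<in>{..<d}-{i}. ?F a j)"
    using assms(2) by (simp add: sum.remove)
  have C: "?F (a[i := a!i - 1]) i + (if s = XX t i then 1 else 0) = ?F a i"
    using assms(2,3,4) by (cases "XX t i = s") auto
  show ?thesis unfolding corr_def using A B C by simp
qed

lemma dup_good:
  assumes "good x a b q m E" "i < d" "0 < a!i"
  shows "good x (a[i := a!i - 1]) b q m (\<lambda>t s. E t s + (if s = XX t i then 1 else 0))"
proof -
  have la: "length a = d" using assms by (simp add: good_def)
  have "\<exists>D. reachable (RR t) (initial_config d (XX t) (LL t) x) D
        \<and> (\<forall>s. s \<noteq> YY t \<longrightarrow> D s = (E t s + (if s = XX t i then 1 else 0)) + corr t (a[i := a!i - 1]) b s)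
        \<and> (act q t \<longrightarrow> D (YY t) = (E t (YY t) + (if YY t = XX t i then 1 else 0)) + m)" if t: "t \<in> T" for t
  proof -
    obtain D where D: "reachable (RR t) (initial_config d (XX t) (LL t) x) D"
        "\<forall>s. s \<noteq> YY t \<longrightarrow> D s = E t s + corr t a b s"
        "act q t \<longrightarrow> D (YY t) = E t (YY t) + m"
      using assms t unfolding good_def by blast
    have "YY t \<noteq> XX t i" using subsT_facts[OF t] assms by auto
    moreover have "\<forall>s. corr t (a[i := a!i - 1]) b s + (if s = XX t i then 1 else 0) = corr t a b s"
      using corr_dup[OF t assms(2,3) la] by blast
    ultimately show ?thesis using D by (intro exI[of _ D]) (auto simp: algebra_simps)
  qed
  moreover have "\<forall>j<d. a[i := a!i - 1]!j + q!j \<le> x!j"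
    using assms la unfolding good_def by (metis diff_le_self le_trans add_le_mono1 nth_list_update)
  ultimately show ?thesis using assms la unfolding good_def by simp
qed

lemma step_appl:
  assumes i: "i < d"
  shows "appl (rstep w i) (cfg x a b q m E) \<longleftrightarrow> b \<and> w = st q \<and> a!i + q!i < x!i"
proof
  assume A: "appl (rstep w i) (cfg x a b q m E)"
  have "fst (rstep w i) (Mst w) \<le> cfg x a b q m E (Mst w)" using A unfolding appl_def by blast
  moreover have "fst (rstep w i) (Xc i) \<le> cfg x a b q m E (Xc i)" using A unfolding appl_def by blast
  ultimately show "b \<and> w = st q \<and> a!i + q!i < x!i" using i
    by (simp add: rstep_def cfg_def split: if_splits)
next
  assume B: "b \<and> w = st q \<and> a!i + q!i < x!i"
  show "appl (rstep w i) (cfg x a b q m E)" unfolding appl_def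
  proof
    fix s show "fst (rstep w i) s \<le> cfg x a b q m E s"
      using i B by (cases s) (auto simp: rstep_def cfg_def)
  qed
qed

lemma step_Yk:
  assumes "good x a True q m E" "i < d" "k < K"
  shows "nat (g k (maxv q)) - m + out k (st q) i = nat (g k (maxv (q[i := Suc (q!i)]))) - m"
proof -
  have lq: "length q = d" and mle: "m \<le> nat (g k (maxv q))" using assms by (simp_all add: good_def)
  have e: "g k (maxv (q[i := Suc (q!i)])) = g k (maxv q) + int (out k (st q) i)"
    using out_eq[OF lq assms(2,3)] by simp
  have "0 \<le> g k (maxv q)" using g_nonneg[OF assms(3)] .
  then show ?thesis using e mle by (simp add: nat_add_distrib)
qed

lemma step_app:
  assumes "good x a True q m E" "i < d" "a!i + q!i < x!i"
  shows "app (rstep (st q) i) (cfg x a True q m E) = cfg x a True (q[i := Suc (q!i)]) m E"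
proof -
  have lq: "length q = d" using assms by (simp add: good_def)
  have sw: "stepw (st q) i = st (q[i := Suc (q!i)])" using stepw_st[OF lq assms(2)] by simp
  show ?thesis
  proof
    fix s show "app (rstep (st q) i) (cfg x a True q m E) s = cfg x a True (q[i := Suc (q!i)]) m E s"
    proof (cases s)
      case (Xc j) then show ?thesis using assms lq by (cases "j = i") (simp_all add: app_def rstep_def cfg_def)
    next
      case (Yk k) then show ?thesis using step_Yk[OF assms(1,2), of k]
        by (simp add: app_def rstep_def cfg_def)
    next
      case (Mst w) then show ?thesis using sw by (simp add: app_def rstep_def cfg_def)
    qed (simp_all add: app_def rstep_def cfg_def)
  qed
qed

lemma step_good:
  assumes "good x a True q m E" "i < d" "a!i + q!i < x!i"
  shows "good x a True (q[i := Suc (q!i)]) m E"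
proof -
  have lq: "length q = d" using assms by (simp add: good_def)
  have k: "\<forall>k<K. m \<le> nat (g k (maxv (q[i := Suc (q!i)])))"
  proof (intro allI impI)
    fix k assume "k < K"
    have "m \<le> nat (g k (maxv q))" using assms \<open>k < K\<close> by (simp add: good_def)
    moreover have "g k (maxv q) \<le> g k (maxv (q[i := Suc (q!i)]))"
      using out_eq[OF lq assms(2) \<open>k < K\<close>] by simp
    ultimately show "m \<le> nat (g k (maxv (q[i := Suc (q!i)])))" by (meson nat_mono order_trans)
  qed
  have act: "act (q[i := Suc (q!i)]) t \<Longrightarrow> act q t" for t
    using lq assms(2) unfolding act_def by (cases "fst t = i") (auto simp: nth_list_update)
  have le: "\<forall>j<d. a!j + q[i := Suc (q!i)]!j \<le> x!j"
    using assms lq unfolding good_def by (auto simp: nth_list_update)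
  have sub: "\<forall>t\<in>T. \<exists>D. reachable (RR t) (initial_config d (XX t) (LL t) x) D
        \<and> (\<forall>s. s \<noteq> YY t \<longrightarrow> D s = E t s + corr t a True s)
        \<and> (act (q[i := Suc (q!i)]) t \<longrightarrow> D (YY t) = E t (YY t) + m)"
  proof
    fix t assume t: "t \<in> T"
    obtain D where D: "reachable (RR t) (initial_config d (XX t) (LL t) x) D"
        "\<forall>s. s \<noteq> YY t \<longrightarrow> D s = E t s + corr t a True s"
        "act q t \<longrightarrow> D (YY t) = E t (YY t) + m"
      using assms(1) t unfolding good_def by blast
    show "\<exists>D. reachable (RR t) (initial_config d (XX t) (LL t) x) D
        \<and> (\<forall>s. s \<noteq> YY t \<longrightarrow> D s = E t s + corr t a True s)
        \<and> (act (q[i := Suc (q!i)]) t \<longrightarrow> D (YY t) = E t (YY t) + m)"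
      using D act[of t] by blast
  qed
  have la: "length a = d" using assms by (simp add: good_def)
  show ?thesis unfolding good_def using la lq le k sub by simp
qed

lemma min_appl:
  assumes lq: "length q = d"
  shows "appl (rmin w) (cfg x a b q m E) \<longleftrightarrow>
    b \<and> w = st q \<and> (\<forall>k<K. m < nat (g k (maxv q))) \<and> (\<forall>t\<in>T. act q t \<longrightarrow> 0 < E t (YY t))"
proof
  assume A: "appl (rmin w) (cfg x a b q m E)"
  have "fst (rmin w) (Mst w) \<le> cfg x a b q m E (Mst w)" using A unfolding appl_def by blast
  then have bw: "b \<and> w = st q" by (simp add: rmin_def cfg_def split: if_splits)
  have "m < nat (g k (maxv q))" if "k < K" for k
  proof -
    have "fst (rmin w) (Yk k) \<le> cfg x a b q m E (Yk k)" using A unfolding appl_def by blast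
    then show ?thesis using that bw by (simp add: rmin_def cfg_def)
  qed
  moreover have "0 < E t (YY t)" if "t \<in> T" "act q t" for t
  proof -
    have "fst (rmin w) (Sub t (YY t)) \<le> cfg x a b q m E (Sub t (YY t))" using A unfolding appl_def by blast
    then show ?thesis using that bw act_st by (simp add: rmin_def cfg_def)
  qed
  ultimately show "b \<and> w = st q \<and> (\<forall>k<K. m < nat (g k (maxv q))) \<and> (\<forall>t\<in>T. act q t \<longrightarrow> 0 < E t (YY t))"
    using bw by blast
next
  assume B: "b \<and> w = st q \<and> (\<forall>k<K. m < nat (g k (maxv q))) \<and> (\<forall>t\<in>T. act q t \<longrightarrow> 0 < E t (YY t))"
  show "appl (rmin w) (cfg x a b q m E)" unfolding appl_def
  proof
    fix s show "fst (rmin w) s \<le> cfg x a b q m E s"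
      using B act_st by (cases s) (auto simp: rmin_def cfg_def Suc_le_eq)
  qed
qed

lemma min_app:
  assumes "good x a True q m E" "\<forall>k<K. m < nat (g k (maxv q))" "\<forall>t\<in>T. act q t \<longrightarrow> 0 < E t (YY t)"
  shows "app (rmin (st q)) (cfg x a True q m E) = cfg x a True q (Suc m) (\<lambda>t s. E t s - (if act q t \<and> s = YY t then 1 else 0))"
proof
  fix s show "app (rmin (st q)) (cfg x a True q m E) s = cfg x a True q (Suc m) (\<lambda>t s. E t s - (if act q t \<and> s = YY t then 1 else 0)) s"
    using assms act_st by (cases s) (auto simp: app_def rmin_def cfg_def)
qed

lemma min_good:
  assumes "good x a True q m E" "\<forall>k<K. m < nat (g k (maxv q))" "\<forall>t\<in>T. act q t \<longrightarrow> 0 < E t (YY t)"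
  shows "good x a True q (Suc m) (\<lambda>t s. E t s - (if act q t \<and> s = YY t then 1 else 0))"
proof -
  have "\<exists>D. reachable (RR t) (initial_config d (XX t) (LL t) x) D
        \<and> (\<forall>s. s \<noteq> YY t \<longrightarrow> D s = (E t s - (if act q t \<and> s = YY t then 1 else 0)) + corr t a True s)
        \<and> (act q t \<longrightarrow> D (YY t) = (E t (YY t) - (if act q t \<and> YY t = YY t then 1 else 0)) + Suc m)" if t: "t \<in> T" for t
  proof -
    obtain D where D: "reachable (RR t) (initial_config d (XX t) (LL t) x) D"
        "\<forall>s. s \<noteq> YY t \<longrightarrow> D s = E t s + corr t a True s"
        "act q t \<longrightarrow> D (YY t) = E t (YY t) + m"
      using assms t unfolding good_def by blast
    show ?thesis using D assms(3) t by (intro exI[of _ D]) auto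
  qed
  moreover have "\<forall>k<K. Suc m \<le> nat (g k (maxv q))" using assms(2) by (simp add: Suc_le_eq)
  ultimately show ?thesis using assms(1) unfolding good_def by simp
qed

lemma sub_appl:
  assumes t: "t \<in> T"
  shows "appl (rsub t r) (cfg x a b q m E) \<longleftrightarrow> (\<forall>s. fst r s \<le> E t s)"
proof
  assume A: "appl (rsub t r) (cfg x a b q m E)"
  show "\<forall>s. fst r s \<le> E t s"
  proof
    fix s
    have "fst (rsub t r) (Sub t s) \<le> cfg x a b q m E (Sub t s)" using A unfolding appl_def by blast
    then show "fst r s \<le> E t s" using t by (simp add: rsub_def cfg_def)
  qed
next
  assume B: "\<forall>s. fst r s \<le> E t s"
  show "appl (rsub t r) (cfg x a b q m E)" unfolding appl_def
  proof
    fix s show "fst (rsub t r) s \<le> cfg x a b q m E s"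
      using B t by (cases s) (auto simp: rsub_def cfg_def)
  qed
qed

lemma sub_app:
  assumes t: "t \<in> T" and B: "\<forall>s. fst r s \<le> E t s"
  shows "app (rsub t r) (cfg x a b q m E) = cfg x a b q m (E(t := \<lambda>s. E t s - fst r s + snd r s))"
proof
  fix s show "app (rsub t r) (cfg x a b q m E) s = cfg x a b q m (E(t := \<lambda>s. E t s - fst r s + snd r s)) s"
    using t by (cases s) (auto simp: app_def rsub_def cfg_def)
qed

lemma sub_good:
  assumes G: "good x a b q m E" and t: "t \<in> T" and r: "r \<in> RR t" and B: "\<forall>s. fst r s \<le> E t s"
  shows "good x a b q m (E(t := \<lambda>s. E t s - fst r s + snd r s))"
proof -
  obtain D where D: "reachable (RR t) (initial_config d (XX t) (LL t) x) D"
      "\<forall>s. s \<noteq> YY t \<longrightarrow> D s = E t s + corr t a b s"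
      "act q t \<longrightarrow> D (YY t) = E t (YY t) + m"
    using G t unfolding good_def by blast
  have R0: "fst r (YY t) = 0" using subsT_facts(5)[OF t r] .
  have ap: "applicable r D" unfolding applicable_def
  proof
    fix s show "fst r s \<le> D s"
    proof (cases "s = YY t")
      case True then show ?thesis using R0 by simp
    next
      case False then show ?thesis using D(2) B by (metis le_add1 order_trans)
    qed
  qed
  have st: "step (RR t) D (apply_rxn r D)" unfolding step_def using r ap by blast
  have D': "reachable (RR t) (initial_config d (XX t) (LL t) x) (apply_rxn r D)"
    using reach_step[OF D(1) st] .
  have X: "\<exists>D. reachable (RR t) (initial_config d (XX t) (LL t) x) D
        \<and> (\<forall>s. s \<noteq> YY t \<longrightarrow> D s = (E t s - fst r s + snd r s) + corr t a b s)
        \<and> (act q t \<longrightarrow> D (YY t) = (E t (YY t) - fst r (YY t) + snd r (YY t)) + m)"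
  proof (intro exI[of _ "apply_rxn r D"] conjI allI impI)
    fix s assume "s \<noteq> YY t"
    then show "apply_rxn r D s = (E t s - fst r s + snd r s) + corr t a b s"
      using D(2) B[rule_format, of s] by (simp add: apply_rxn_def)
  next
    assume "act q t"
    then show "apply_rxn r D (YY t) = (E t (YY t) - fst r (YY t) + snd r (YY t)) + m"
      using D(3) R0 by (simp add: apply_rxn_def)
  qed (rule D')
  show ?thesis using G X unfolding good_def by auto
qed

subsection \<open>invariant\<close>

abbreviation "Big \<equiv> liftr ` Rsp"
abbreviation "E0 \<equiv> (\<lambda>(t::nat\<times>nat) (s::nat). 0::nat)"

lemma ex5: "good x a' b' q' m' E' \<Longrightarrow> C = cfg x a' b' q' m' E' \<Longrightarrow>
  \<exists>a' b' q' m' E'. good x a' b' q' m' E' \<and> C = cfg x a' b' q' m' E'"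
  by blast

lemma pres:
  assumes G: "good x a b q m E" and r: "r \<in> Rsp" and A: "appl r (cfg x a b q m E)"
  shows "\<exists>a' b' q' m' E'. good x a' b' q' m' E' \<and> app r (cfg x a b q m E) = cfg x a' b' q' m' E'"
proof -
  have lq: "length q = d" using G by (simp add: good_def)
  show ?thesis
  using r unfolding Rsp_def
  proof (elim UnE)
    assume "r \<in> {rstart}"
    then have r: "r = rstart" by simp
    then have b: "\<not> b" using A start_appl by simp
    have bF: "b = False" using b by simp
    have G': "good x a False q m E" using G b by simp
    show ?thesis unfolding r bF by (rule ex5[OF start_good[OF G'] start_app[OF G']])
  next
    assume "r \<in> rdup ` {..<d}"
    then obtain i where i: "i < d" "r = rdup i" by auto
    have p: "0 < a!i" using A[unfolded i(2)] dup_appl[OF i(1)] by simp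
    show ?thesis unfolding i(2) by (rule ex5[OF dup_good[OF G i(1) p] dup_app[OF G i(1) p]])
  next
    assume "r \<in> (\<lambda>(w,i). rstep w i) ` (Wset \<times> {..<d})"
    then obtain w i where i: "i < d" "r = rstep w i" by auto
    then have c: "b" "w = st q" "a!i + q!i < x!i" using A[unfolded i(2)] step_appl[OF i(1)] by simp_all
    have G': "good x a True q m E" using G c by simp
    have bT: "b = True" using c by simp
    show ?thesis unfolding i(2) c(2) bT by (rule ex5[OF step_good[OF G' i(1) c(3)] step_app[OF G' i(1) c(3)]])
  next
    assume "r \<in> rmin ` Wset"
    then obtain w where w: "r = rmin w" by auto
    then have c: "b" "w = st q" "\<forall>k<K. m < nat (g k (maxv q))" "\<forall>t\<in>T. act q t \<longrightarrow> 0 < E t (YY t)"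
      using A[unfolded w] min_appl[OF lq] by simp_all
    have G': "good x a True q m E" using G c by simp
    have bT: "b = True" using c by simp
    show ?thesis unfolding w c(2) bT by (rule ex5[OF min_good[OF G' c(3,4)] min_app[OF G' c(3,4)]])
  next
    assume "r \<in> (\<Union>t\<in>T. rsub t ` RR t)"
    then obtain t r0 where t: "t \<in> T" "r0 \<in> RR t" "r = rsub t r0" by auto
    then have c: "\<forall>s. fst r0 s \<le> E t s" using A[unfolded t(3)] sub_appl[OF t(1)] by simp
    show ?thesis unfolding t(3) by (rule ex5[OF sub_good[OF G t(1,2) c] sub_app[of t r0 E x a b q m, OF t(1) c]])
  qed
qed

lemma invariant:
  assumes "reachable Big (liftc (cfg x a0 b0 q0 m0 E0')) C" "good x a0 b0 q0 m0 E0'"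
  shows "\<exists>a b q m E. good x a b q m E \<and> C = liftc (cfg x a b q m E)"
  using assms(1) unfolding reachable_def
proof (induction rule: rtranclp_induct)
  case base then show ?case using assms(2) by blast
next
  case (step C1 C2)
  then obtain a b q m E where G: "good x a b q m E" and C1: "C1 = liftc (cfg x a b q m E)" by blast
  from step(2) obtain r where r: "r \<in> Big" "applicable r C1" "C2 = apply_rxn r C1"
    unfolding step_def by blast
  then obtain r' where r': "r' \<in> Rsp" "r = liftr r'" by blast
  have A: "appl r' (cfg x a b q m E)" using r r' C1 applicable_liftr by simp
  have C2: "C2 = liftc (app r' (cfg x a b q m E))" using r r' C1 apply_liftr by simp
  show ?case using pres[OF G r'(1) A] C2 by metis
qed

lemma fire: "r \<in> Rsp \<Longrightarrow> appl r C \<Longrightarrow> reachable Big (liftc C) (liftc (app r C))"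
  using reach_step[OF reach_refl step_liftI] by blast

lemma init_eq:
  "initial_config d (\<lambda>i. to_nat (Xin i)) (to_nat Ld) x = liftc (cfg x x False (replicate d 0) 0 E0)"
proof
  fix z
  show "initial_config d (\<lambda>i. to_nat (Xin i)) (to_nat Ld) x z = liftc (cfg x x False (replicate d 0) 0 E0) z"
  proof (cases "z \<in> range (to_nat :: sp \<Rightarrow> nat)")
    case True
    then obtain s :: sp where z: "z = to_nat s" by blast
    show ?thesis unfolding z initial_config_def
      by (cases s) (simp_all add: cfg_def sum.delta)
  next
    case False
    then have "z \<noteq> to_nat Ld" "\<forall>i. to_nat (Xin i) \<noteq> z" by auto
    then show ?thesis using False by (simp add: initial_config_def liftc_def)
  qed
qed

lemma init_good:
  assumes "length x = d"
  shows "good x x False (replicate d 0) 0 E0"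
proof -
  have "\<exists>D. reachable (RR t) (initial_config d (XX t) (LL t) x) D
        \<and> (\<forall>s. s \<noteq> YY t \<longrightarrow> D s = 0 + corr t x False s)
        \<and> (act (replicate d 0) t \<longrightarrow> D (YY t) = 0 + 0)" if t: "t \<in> T" for t
  proof (intro exI[of _ "initial_config d (XX t) (LL t) x"] conjI allI impI)
    show "reachable (RR t) (initial_config d (XX t) (LL t) x) (initial_config d (XX t) (LL t) x)"
      by (rule reach_refl)
    fix s show "initial_config d (XX t) (LL t) x s = 0 + corr t x False s"
      by (simp add: initial_config_def corr_def)
  next
    have "YY t \<noteq> LL t" "YY t \<notin> XX t ` {..<d}" using subsT_facts[OF t] by simp_all
    then show "initial_config d (XX t) (LL t) x (YY t) = 0 + 0"
      by (auto simp: initial_config_def intro!: sum.neutral) (metis image_eqI lessThan_iff)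
  qed
  then show ?thesis using assms unfolding good_def by simp
qed

subsection \<open>safety\<close>

lemma safety:
  assumes x: "length x = d" and G: "good x a b q m E"
  shows "m \<le> f x"
proof (cases b)
  case False then show ?thesis using G by (simp add: good_def)
next
  case True
  have lq: "length q = d" and le: "\<forall>i<d. a!i + q!i \<le> x!i" using G by (simp_all add: good_def)
  have qx: "vle q x" unfolding vle_iff using lq x le by (metis add_leD2)
  show ?thesis
  proof (cases "vle n q")
    case True
    obtain k where k: "k < K" "g k q = int (f q)" using f_attained[OF lq True] by blast
    have "m \<le> nat (g k (maxv q))" using G \<open>b\<close> k(1) by (simp add: good_def)
    also have "\<dots> = f q" using k(2) maxv_id[OF True] by simp
    also have "\<dots> \<le> f x" using f_mono[OF qx lq] .
    finally show ?thesis .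
  next
    case False
    then obtain i where i: "i < d" "q!i < n!i" using lq len_n unfolding vle_iff by (metis not_le)
    let ?t = "(i, q!i)"
    have t: "?t \<in> T" using i by (simp add: T_def)
    have ac: "act q ?t" by (simp add: act_def)
    obtain D where D: "reachable (RR ?t) (initial_config d (XX ?t) (LL ?t) x) D"
        "D (YY ?t) = E ?t (YY ?t) + m"
      using G t ac unfolding good_def by blast
    have "D (YY ?t) \<le> h ?t x" using oblivious_bound[OF _ _ x D(1)] subsT[OF t] by blast
    then have "m \<le> f (x[i := q!i])" using D(2) by (simp add: h_def fix_input_def)
    also have "\<dots> \<le> f x"
    proof (rule f_mono)
      show "vle (x[i := q!i]) x" unfolding vle_iff using x le i
        by (auto simp: nth_list_update)
    qed (simp add: x)
    finally show ?thesis .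
  qed
qed

subsection \<open>liveness\<close>

lemma phase_dup:
  "good x a True q m E \<Longrightarrow> \<exists>E'. reachable Big (liftc (cfg x a True q m E))
     (liftc (cfg x (replicate d 0) True q m E')) \<and> good x (replicate d 0) True q m E'"
proof (induction "sum_list a" arbitrary: a E rule: less_induct)
  case less
  have la: "length a = d" using less.prems by (simp add: good_def)
  show ?case
  proof (cases "\<exists>i<d. 0 < a!i")
    case False
    then have "a = replicate d 0" using la by (intro nth_equalityI) auto
    then show ?thesis using less.prems reach_refl by blast
  next
    case True
    then obtain i where i: "i < d" "0 < a!i" by blast
    let ?a = "a[i := a!i - 1]" and ?E = "\<lambda>t s. E t s + (if s = XX t i then 1 else 0)"
    have r: "rdup i \<in> Rsp" using i by (simp add: Rsp_def)
    have ap: "appl (rdup i) (cfg x a True q m E)" using dup_appl[OF i(1)] i(2) by simp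
    have R1: "reachable Big (liftc (cfg x a True q m E)) (liftc (cfg x ?a True q m ?E))"
      using fire[OF r ap] dup_app[OF less.prems i] by simp
    have G1: "good x ?a True q m ?E" using dup_good[OF less.prems i] .
    have "sum_list ?a < sum_list a"
      using i la sum_list_update[of i a "a!i - 1"] elem_le_sum_list[of i a] by simp
    then obtain E' where "reachable Big (liftc (cfg x ?a True q m ?E)) (liftc (cfg x (replicate d 0) True q m E'))"
       "good x (replicate d 0) True q m E'" using less.hyps[OF _ G1] by blast
    then show ?thesis using R1 reach_trans by blast
  qed
qed

lemma phase_step:
  "good x (replicate d 0) True q m E \<Longrightarrow> length x = d \<Longrightarrow> reachable Big (liftc (cfg x (replicate d 0) True q m E))
     (liftc (cfg x (replicate d 0) True x m E)) \<and> good x (replicate d 0) True x m E"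
proof (induction "\<Sum>j<d. x!j - q!j" arbitrary: q rule: less_induct)
  case less
  have lq: "length q = d" and le: "\<forall>j<d. q!j \<le> x!j" using less.prems by (simp_all add: good_def)
  show ?case
  proof (cases "\<exists>i<d. q!i < x!i")
    case False
    then have "q = x" using lq le less.prems(2) by (intro nth_equalityI) (auto simp: not_less intro: antisym, meson le_antisym not_le)
    then show ?thesis using less.prems reach_refl by blast
  next
    case True
    then obtain i where i: "i < d" "q!i < x!i" by blast
    let ?q = "q[i := Suc (q!i)]"
    have c: "replicate d 0 ! i + q!i < x!i" using i by simp
    have r: "rstep (st q) i \<in> Rsp" using i st_W by (auto simp: Rsp_def)
    have ap: "appl (rstep (st q) i) (cfg x (replicate d 0) True q m E)" using step_appl[OF i(1)] c by simp
    have R1: "reachable Big (liftc (cfg x (replicate d 0) True q m E)) (liftc (cfg x (replicate d 0) True ?q m E))"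
      using fire[OF r ap] step_app[OF less.prems(1) i(1) c] by simp
    have G1: "good x (replicate d 0) True ?q m E" using step_good[OF less.prems(1) i(1) c] .
    have "(\<Sum>j<d. x!j - ?q!j) < (\<Sum>j<d. x!j - q!j)"
    proof (rule sum_strict_mono_ex1)
      show "\<forall>j\<in>{..<d}. x!j - ?q!j \<le> x!j - q!j"
      proof
        fix j assume "j \<in> {..<d}"
        then show "x!j - ?q!j \<le> x!j - q!j" using lq by (cases "j = i") (simp_all add: nth_list_update)
      qed
      show "\<exists>j\<in>{..<d}. x!j - ?q!j < x!j - q!j" using i lq by (intro bexI[of _ i]) auto
    qed simp
    then have "reachable Big (liftc (cfg x (replicate d 0) True ?q m E)) (liftc (cfg x (replicate d 0) True x m E))
       \<and> good x (replicate d 0) True x m E" using less.hyps[OF _ G1 less.prems(2)] by blast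
    then show ?thesis using R1 reach_trans by blast
  qed
qed

lemma lift_sub_path:
  assumes t: "t \<in> T" and R: "reachable (RR t) D D'"
  shows "\<forall>E. (\<forall>s. s \<noteq> YY t \<longrightarrow> D s = E t s) \<longrightarrow> (\<exists>E'. reachable Big (liftc (cfg x a b q m E)) (liftc (cfg x a b q m E'))
     \<and> (\<forall>t'. t' \<noteq> t \<longrightarrow> E' t' = E t') \<and> (\<forall>s. s \<noteq> YY t \<longrightarrow> D' s = E' t s)
     \<and> E' t (YY t) + D (YY t) = E t (YY t) + D' (YY t))"
  using R[unfolded reachable_def]
proof (induction rule: rtranclp_induct)
  case base
  show ?case
  proof (intro allI impI)
    fix E assume "\<forall>s. s \<noteq> YY t \<longrightarrow> D s = E t s"
    then show "\<exists>E'. reachable Big (liftc (cfg x a b q m E)) (liftc (cfg x a b q m E'))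
     \<and> (\<forall>t'. t' \<noteq> t \<longrightarrow> E' t' = E t') \<and> (\<forall>s. s \<noteq> YY t \<longrightarrow> D s = E' t s)
     \<and> E' t (YY t) + D (YY t) = E t (YY t) + D (YY t)"
      by (intro exI[of _ E] conjI reach_refl) auto
  qed
next
  case (step D1 D2)
  show ?case
  proof (intro allI impI)
    fix E assume H: "\<forall>s. s \<noteq> YY t \<longrightarrow> D s = E t s"
    obtain E1 where E1: "reachable Big (liftc (cfg x a b q m E)) (liftc (cfg x a b q m E1))"
      "\<forall>t'. t' \<noteq> t \<longrightarrow> E1 t' = E t'" "\<forall>s. s \<noteq> YY t \<longrightarrow> D1 s = E1 t s"
      "E1 t (YY t) + D (YY t) = E t (YY t) + D1 (YY t)"
      using step.IH H by blast
    obtain r where r: "r \<in> RR t" "applicable r D1" "D2 = apply_rxn r D1" using step.hyps(2) unfolding step_def by blast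
    have R0: "fst r (YY t) = 0" using subsT_facts(5)[OF t r(1)] .
    have B: "\<forall>s. fst r s \<le> E1 t s"
    proof
      fix s show "fst r s \<le> E1 t s"
        using r(2) E1(3) R0 unfolding applicable_def by (cases "s = YY t") (auto, metis)
    qed
    have rr: "rsub t r \<in> Rsp" using t r(1) by (auto simp: Rsp_def)
    have ap: "appl (rsub t r) (cfg x a b q m E1)" using sub_appl[OF t] B by simp
    let ?E2 = "E1(t := \<lambda>s. E1 t s - fst r s + snd r s)"
    have R2: "reachable Big (liftc (cfg x a b q m E1)) (liftc (cfg x a b q m ?E2))"
      using fire[OF rr ap] sub_app[of t r E1 x a b q m, OF t B] by simp
    show "\<exists>E'. reachable Big (liftc (cfg x a b q m E)) (liftc (cfg x a b q m E'))
     \<and> (\<forall>t'. t' \<noteq> t \<longrightarrow> E' t' = E t') \<and> (\<forall>s. s \<noteq> YY t \<longrightarrow> D2 s = E' t s)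
     \<and> E' t (YY t) + D (YY t) = E t (YY t) + D2 (YY t)"
    proof (intro exI[of _ ?E2] conjI allI impI)
      show "reachable Big (liftc (cfg x a b q m E)) (liftc (cfg x a b q m ?E2))"
        using reach_trans[OF E1(1) R2] .
      fix t' assume "t' \<noteq> t" then show "?E2 t' = E t'" using E1(2) by (metis fun_upd_other)
    next
      fix s assume "s \<noteq> YY t" then show "D2 s = ?E2 t s" using r(3) E1(3) by (simp add: apply_rxn_def)
    next
      show "?E2 t (YY t) + D (YY t) = E t (YY t) + D2 (YY t)" using r(3) E1(4) R0 by (simp add: apply_rxn_def)
    qed
  qed
qed

lemma corr_zero: "corr t (replicate d 0) True s = 0"
  unfolding corr_def by (auto intro!: sum.neutral)

lemma finite_T: "finite T"
proof -
  have "T \<subseteq> {..<d} \<times> {..<sum_list n}"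
    using len_n by (auto simp: T_def) (metis elem_le_sum_list order_less_le_trans)
  then show ?thesis by (rule finite_subset) simp
qed

lemma phase_sub:
  assumes "finite U" "U \<subseteq> T" "good x (replicate d 0) True x m E"
  shows "\<exists>E'. reachable Big (liftc (cfg x (replicate d 0) True x m E)) (liftc (cfg x (replicate d 0) True x m E'))
     \<and> good x (replicate d 0) True x m E' \<and> (\<forall>t\<in>U. act x t \<longrightarrow> E' t (YY t) + m = h t x)"
  using assms
proof (induction U rule: finite_induct)
  case empty then show ?case using reach_refl by blast
next
  case (insert t U)
  then obtain E1 where E1: "reachable Big (liftc (cfg x (replicate d 0) True x m E)) (liftc (cfg x (replicate d 0) True x m E1))"
     "good x (replicate d 0) True x m E1" "\<forall>t\<in>U. act x t \<longrightarrow> E1 t (YY t) + m = h t x" by blast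
  have t: "t \<in> T" using insert by simp
  obtain D where D: "reachable (RR t) (initial_config d (XX t) (LL t) x) D"
      "\<forall>s. s \<noteq> YY t \<longrightarrow> D s = E1 t s" "act x t \<longrightarrow> D (YY t) = E1 t (YY t) + m"
    using E1(2) t unfolding good_def by (auto simp: corr_zero)
  have lx: "length x = d" using E1(2) by (simp add: good_def)
  obtain Cf where Cf: "reachable (RR t) D Cf" "Cf (YY t) = h t x"
    using subsT[OF t] D(1) lx unfolding stably_computes_def by blast
  obtain E2 where E2: "reachable Big (liftc (cfg x (replicate d 0) True x m E1)) (liftc (cfg x (replicate d 0) True x m E2))"
     "\<forall>t'. t' \<noteq> t \<longrightarrow> E2 t' = E1 t'" "\<forall>s. s \<noteq> YY t \<longrightarrow> Cf s = E2 t s"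
     "E2 t (YY t) + D (YY t) = E1 t (YY t) + Cf (YY t)"
    using lift_sub_path[OF t Cf(1), of x "replicate d 0" True x m] D(2) by blast
  have Cfr: "reachable (RR t) (initial_config d (XX t) (LL t) x) Cf" using reach_trans[OF D(1) Cf(1)] .
  have G2: "good x (replicate d 0) True x m E2"
    unfolding good_def
  proof (intro conjI ballI)
    fix t' assume t': "t' \<in> T"
    show "\<exists>D. reachable (RR t') (initial_config d (XX t') (LL t') x) D
        \<and> (\<forall>s. s \<noteq> YY t' \<longrightarrow> D s = E2 t' s + corr t' (replicate d 0) True s)
        \<and> (act x t' \<longrightarrow> D (YY t') = E2 t' (YY t') + m)"
    proof (cases "t' = t")
      case True
      show ?thesis unfolding True corr_zero
        using Cfr E2(3,4) D(3) by (intro exI[of _ Cf]) auto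
    next
      case False
      then have e: "E2 t' = E1 t'" using E2(2) by blast
      show ?thesis unfolding e using E1(2) t' unfolding good_def by blast
    qed
  qed (use E1(2) in \<open>simp_all add: good_def\<close>)
  have "\<forall>t'\<in>insert t U. act x t' \<longrightarrow> E2 t' (YY t') + m = h t' x"
  proof (intro ballI impI)
    fix t' assume t': "t' \<in> insert t U" "act x t'"
    show "E2 t' (YY t') + m = h t' x"
    proof (cases "t' = t")
      case True then show ?thesis using E2(4) D(3) Cf(2) t'(2) by simp
    next
      case False
      have e: "E2 t' = E1 t'" using E2(2) False by blast
      have u: "t' \<in> U" using t'(1) False by blast
      show ?thesis unfolding e using E1(3) u t'(2) by blast
    qed
  qed
  then show ?case using reach_trans[OF E1(1) E2(1)] G2 by blast
qed

lemma phase_min: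
  assumes "good x (replicate d 0) True x m E" "\<forall>t\<in>T. act x t \<longrightarrow> E t (YY t) + m = h t x"
  shows "\<exists>m' E'. reachable Big (liftc (cfg x (replicate d 0) True x m E)) (liftc (cfg x (replicate d 0) True x m' E'))
     \<and> good x (replicate d 0) True x m' E' \<and> f x \<le> m'"
  using assms
proof (induction "nat (g 0 (maxv x)) - m" arbitrary: m E rule: less_induct)
  case less
  have lx: "length x = d" using less.prems by (simp add: good_def)
  show ?case
  proof (cases "(\<forall>k<K. m < nat (g k (maxv x))) \<and> (\<forall>t\<in>T. act x t \<longrightarrow> 0 < E t (YY t))")
    case True
    let ?E = "\<lambda>t s. E t s - (if act x t \<and> s = YY t then 1 else 0)"
    have r: "rmin (st x) \<in> Rsp" using st_W by (simp add: Rsp_def)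
    have ap: "appl (rmin (st x)) (cfg x (replicate d 0) True x m E)" using min_appl[OF lx] True by simp
    have R1: "reachable Big (liftc (cfg x (replicate d 0) True x m E)) (liftc (cfg x (replicate d 0) True x (Suc m) ?E))"
      using fire[OF r ap] min_app[OF less.prems(1)] True by simp
    have G1: "good x (replicate d 0) True x (Suc m) ?E" using min_good[OF less.prems(1)] True by simp
    have I1: "\<forall>t\<in>T. act x t \<longrightarrow> ?E t (YY t) + Suc m = h t x"
    proof (intro ballI impI)
      fix t assume t: "t \<in> T" "act x t"
      then have "0 < E t (YY t)" "E t (YY t) + m = h t x" using less.prems(2) True by blast+
      then show "?E t (YY t) + Suc m = h t x" using t(2) by simp
    qed
    have K: "0 < K" using gs_ne by simp
    have "nat (g 0 (maxv x)) - Suc m < nat (g 0 (maxv x)) - m" using True K by auto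
    then obtain m' E' where "reachable Big (liftc (cfg x (replicate d 0) True x (Suc m) ?E)) (liftc (cfg x (replicate d 0) True x m' E'))
     \<and> good x (replicate d 0) True x m' E' \<and> f x \<le> m'" using less.hyps[OF _ G1 I1] by blast
    then show ?thesis using R1 reach_trans by blast
  next
    case False
    have "f x \<le> m"
    proof (cases "\<forall>k<K. m < nat (g k (maxv x))")
      case True
      with False obtain t where t: "t \<in> T" "act x t" "E t (YY t) = 0" by auto
      obtain i j where ij: "t = (i,j)" by (cases t)
      have "E t (YY t) + m = h t x" using less.prems(2) t by blast
      then have "m = f (x[i := j])" using t ij by (simp add: h_def fix_input_def)
      moreover have "f x \<le> f (x[i := j])"
        using t ij lx by (intro f_mono vle_upd) (auto simp: act_def T_def)
      ultimately show ?thesis by simp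
    next
      case False
      then obtain k where k: "k < K" "nat (g k (maxv x)) \<le> m" by auto
      have "int (f (maxv x)) \<le> g k (maxv x)" using g_ge_f[OF k(1) _ vle_maxv] by simp
      moreover have "f x \<le> f (maxv x)"
      proof (rule f_mono)
        show "vle x (maxv x)" unfolding vle_iff using lx by (simp add: nth_maxv)
      qed (rule lx)
      ultimately show ?thesis using k(2) by linarith
    qed
    then show ?thesis using less.prems(1) reach_refl by blast
  qed
qed

definition "Ssp = Xin ` {..<d} \<union> {Yo, Ld} \<union> Xc ` {..<d} \<union> Yk ` {..<K} \<union> Mst ` Wset \<union> (\<Union>t\<in>T. Sub t ` SS t)"

lemma finite_W: "finite Wset"
proof -
  have "Wset \<subseteq> {w. set w \<subseteq> {..<sum_list n + P} \<and> length w = d}"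
  proof
    fix w assume w: "w \<in> Wset"
    have "\<forall>v\<in>set w. v < sum_list n + P"
    proof
      fix v assume "v \<in> set w"
      then obtain i where i: "i < length w" "v = w!i" by (auto simp: in_set_conv_nth)
      then have "w!i < n!i + P" "i < length n" using w len_n by (auto simp: Wset_def)
      then show "v < sum_list n + P" using i elem_le_sum_list[of i n] by simp
    qed
    then show "w \<in> {w. set w \<subseteq> {..<sum_list n + P} \<and> length w = d}" using w by (auto simp: Wset_def)
  qed
  then show ?thesis by (rule finite_subset) (rule finite_lists_length_eq, simp)
qed

lemma finite_Ssp: "finite Ssp"
proof -
  have "\<forall>t\<in>T. finite (SS t)" using subsT unfolding stably_computes_def by blast
  then show ?thesis unfolding Ssp_def using finite_T finite_W by auto
qed

lemma finite_Rsp: "finite Rsp"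
  unfolding Rsp_def using finite_T finite_W subsT unfolding stably_computes_def by auto

lemma sub_in_S: "t \<in> T \<Longrightarrow> (\<forall>i<d. XX t i \<in> SS t) \<and> YY t \<in> SS t \<and> LL t \<in> SS t
   \<and> (\<forall>r\<in>RR t. supported_in (SS t) (fst r) \<and> supported_in (SS t) (snd r))"
  using subsT unfolding stably_computes_def by blast

lemma Ssp_in: "t \<in> T \<Longrightarrow> s \<in> SS t \<Longrightarrow> Sub t s \<in> Ssp" "w \<in> Wset \<Longrightarrow> Mst w \<in> Ssp"
  "k < K \<Longrightarrow> Yk k \<in> Ssp" "i < d \<Longrightarrow> Xin i \<in> Ssp" "i < d \<Longrightarrow> Xc i \<in> Ssp" "Yo \<in> Ssp" "Ld \<in> Ssp"
  unfolding Ssp_def by auto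

lemma supp_Rsp:
  assumes "r \<in> Rsp"
  shows "(\<forall>s. fst r s \<noteq> 0 \<longrightarrow> s \<in> Ssp) \<and> (\<forall>s. snd r s \<noteq> 0 \<longrightarrow> s \<in> Ssp)"
  using assms unfolding Rsp_def
proof (elim UnE)
  assume "r \<in> {rstart}"
  then have r: "r = rstart" by simp
  show ?thesis unfolding r
  proof (intro conjI allI impI)
    fix s assume "fst rstart s \<noteq> 0" then show "s \<in> Ssp" by (cases s) (auto simp: rstart_def Ssp_in split: if_splits)
  next
    fix s assume "snd rstart s \<noteq> 0" then show "s \<in> Ssp"
      using st_W sub_in_S by (cases s) (auto simp: rstart_def Ssp_in split: if_splits)
  qed
next
  assume "r \<in> rdup ` {..<d}"
  then obtain i where i: "i < d" "r = rdup i" by auto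
  show ?thesis unfolding i(2)
  proof (intro conjI allI impI)
    fix s assume "fst (rdup i) s \<noteq> 0" then show "s \<in> Ssp" using i by (cases s) (auto simp: rdup_def Ssp_in split: if_splits)
  next
    fix s assume "snd (rdup i) s \<noteq> 0" then show "s \<in> Ssp"
      using i sub_in_S by (cases s) (auto simp: rdup_def Ssp_in split: if_splits)
  qed
next
  assume "r \<in> (\<lambda>(w,i). rstep w i) ` (Wset \<times> {..<d})"
  then obtain w i where i: "w \<in> Wset" "i < d" "r = rstep w i" by auto
  show ?thesis unfolding i(3)
  proof (intro conjI allI impI)
    fix s assume "fst (rstep w i) s \<noteq> 0" then show "s \<in> Ssp" using i by (cases s) (auto simp: rstep_def Ssp_in split: if_splits)
  next
    fix s assume "snd (rstep w i) s \<noteq> 0" then show "s \<in> Ssp"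
      using i stepw_W by (cases s) (auto simp: rstep_def Ssp_in split: if_splits)
  qed
next
  assume "r \<in> rmin ` Wset"
  then obtain w where i: "w \<in> Wset" "r = rmin w" by auto
  show ?thesis unfolding i(2)
  proof (intro conjI allI impI)
    fix s assume "fst (rmin w) s \<noteq> 0" then show "s \<in> Ssp" using i sub_in_S by (cases s) (auto simp: rmin_def Ssp_in split: if_splits)
  next
    fix s assume "snd (rmin w) s \<noteq> 0" then show "s \<in> Ssp"
      using i by (cases s) (auto simp: rmin_def Ssp_in split: if_splits)
  qed
next
  assume "r \<in> (\<Union>t\<in>T. rsub t ` RR t)"
  then obtain t r0 where t: "t \<in> T" "r0 \<in> RR t" "r = rsub t r0" by auto
  then have S: "supported_in (SS t) (fst r0)" "supported_in (SS t) (snd r0)" using sub_in_S by blast+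
  show ?thesis unfolding t(3)
  proof (intro conjI allI impI)
    fix s assume "fst (rsub t r0) s \<noteq> 0" then show "s \<in> Ssp" using t S unfolding supported_in_def
      by (cases s) (auto simp: rsub_def split: if_splits intro!: Ssp_in(1))
  next
    fix s assume "snd (rsub t r0) s \<noteq> 0" then show "s \<in> Ssp" using t S unfolding supported_in_def
      by (cases s) (auto simp: rsub_def split: if_splits intro!: Ssp_in(1))
  qed
qed

lemma supp_lift: "\<forall>s. F s \<noteq> 0 \<longrightarrow> s \<in> Ssp \<Longrightarrow> supported_in (to_nat ` Ssp) (liftc F)"
  unfolding supported_in_def liftc_def
proof (intro allI impI)
  fix z assume H: "\<forall>s. F s \<noteq> 0 \<longrightarrow> s \<in> Ssp" and z: "z \<notin> to_nat ` Ssp"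
  show "(if z \<in> range (to_nat::sp\<Rightarrow>nat) then F (from_nat z) else 0) = 0"
  proof (cases "z \<in> range (to_nat::sp\<Rightarrow>nat)")
    case True
    then obtain s :: sp where s: "z = to_nat s" by blast
    then have "s \<notin> Ssp" using z by blast
    then show ?thesis using H s by auto
  qed simp
qed

lemma oblivious_Rsp: "r \<in> Rsp \<Longrightarrow> fst r Yo = 0"
  unfolding Rsp_def by (auto simp: rstart_def rdup_def rstep_def rmin_def rsub_def)

lemma ensure_started:
  assumes "good x a b q m E"
  shows "\<exists>E1. reachable Big (liftc (cfg x a b q m E)) (liftc (cfg x a True q m E1)) \<and> good x a True q m E1"
proof (cases b)
  case True
  then have bT: "b = True" by simp
  show ?thesis unfolding bT using assms bT reach_refl by blast
next
  case False
  then have G: "good x a False q m E" using assms by simp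
  have r: "rstart \<in> Rsp" by (simp add: Rsp_def)
  have ap: "appl rstart (cfg x a False q m E)" using start_appl by simp
  show ?thesis using fire[OF r ap] start_app[OF G] start_good[OF G] False by auto
qed

theorem main: "obliviously_computable d f"
  unfolding obliviously_computable_def
proof (intro exI conjI)
  let ?X = "\<lambda>i. to_nat (Xin i)"
  have obl: "output_oblivious Big (to_nat Yo)"
    unfolding output_oblivious_def liftr_def using oblivious_Rsp by auto
  then show "output_oblivious Big (to_nat Yo)" .
  show "stably_computes (to_nat ` Ssp) Big d ?X (to_nat Yo) (to_nat Ld) f"
    unfolding stably_computes_def
  proof (intro conjI allI impI ballI)
    show "finite (to_nat ` Ssp)" using finite_Ssp by simp
    show "finite Big" using finite_Rsp by simp
    fix r assume "r \<in> Big"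
    then obtain r' where r': "r' \<in> Rsp" "r = liftr r'" by blast
    show "supported_in (to_nat ` Ssp) (fst r)" using supp_lift supp_Rsp[OF r'(1)] r'(2) by (simp add: liftr_def)
    show "supported_in (to_nat ` Ssp) (snd r)" using supp_lift supp_Rsp[OF r'(1)] r'(2) by (simp add: liftr_def)
  next
    fix i assume "i < d" then show "?X i \<in> to_nat ` Ssp" by (simp add: Ssp_def)
  next
    show "inj_on ?X {..<d}" by (auto simp: inj_on_def)
    show "to_nat Yo \<in> to_nat ` Ssp" "to_nat Ld \<in> to_nat ` Ssp" by (simp_all add: Ssp_def)
    show "to_nat Yo \<noteq> to_nat Ld" by simp
    show "to_nat Yo \<notin> ?X ` {..<d}" "to_nat Ld \<notin> ?X ` {..<d}" by auto
  next
    fix x :: "nat list" and C assume lx: "length x = d"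
      and R: "reachable Big (initial_config d ?X (to_nat Ld) x) C"
    have G0: "good x x False (replicate d 0) 0 E0" using init_good[OF lx] .
    have R0: "reachable Big (liftc (cfg x x False (replicate d 0) 0 E0)) C" using R init_eq by simp
    obtain a b q m E where G: "good x a b q m E" and C: "C = liftc (cfg x a b q m E)"
      using invariant[OF R0 G0] by blast
    obtain E1 where E1: "reachable Big C (liftc (cfg x a True q m E1))" "good x a True q m E1"
      using ensure_started[OF G] C by blast
    obtain E2 where E2: "reachable Big (liftc (cfg x a True q m E1)) (liftc (cfg x (replicate d 0) True q m E2))"
      "good x (replicate d 0) True q m E2" using phase_dup[OF E1(2)] by blast
    have E3: "reachable Big (liftc (cfg x (replicate d 0) True q m E2)) (liftc (cfg x (replicate d 0) True x m E2))"
      "good x (replicate d 0) True x m E2" using phase_step[OF E2(2) lx] by blast+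
    obtain E4 where E4: "reachable Big (liftc (cfg x (replicate d 0) True x m E2)) (liftc (cfg x (replicate d 0) True x m E4))"
      "good x (replicate d 0) True x m E4" "\<forall>t\<in>T. act x t \<longrightarrow> E4 t (YY t) + m = h t x"
      using phase_sub[OF finite_T subset_refl E3(2)] by blast
    obtain m' E5 where E5: "reachable Big (liftc (cfg x (replicate d 0) True x m E4)) (liftc (cfg x (replicate d 0) True x m' E5))"
      "good x (replicate d 0) True x m' E5" "f x \<le> m'"
      using phase_min[OF E4(2,3)] by blast
    let ?Cf = "liftc (cfg x (replicate d 0) True x m' E5)"
    have RC: "reachable Big C ?Cf"
      using reach_trans[OF reach_trans[OF reach_trans[OF reach_trans[OF E1(1) E2(1)] E3(1)] E4(1)] E5(1)] .
    have mf: "m' = f x" using safety[OF lx E5(2)] E5(3) by simp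
    have CfY: "?Cf (to_nat Yo) = f x" using mf by (simp add: cfg_def)
    have "stable Big (to_nat Yo) ?Cf"
      unfolding stable_def
    proof (intro allI impI)
      fix D assume RD: "reachable Big ?Cf D"
      have "reachable Big (liftc (cfg x x False (replicate d 0) 0 E0)) D"
        using reach_trans[OF reach_trans[OF R0 RC] RD] .
      then obtain a' b' q' m'' E' where G': "good x a' b' q' m'' E'" and D: "D = liftc (cfg x a' b' q' m'' E')"
        using invariant[OF _ G0] by blast
      have "D (to_nat Yo) \<le> f x" using safety[OF lx G'] D by (simp add: cfg_def)
      moreover have "?Cf (to_nat Yo) \<le> D (to_nat Yo)"
        using oblivious_mono[OF obl RD] .
      ultimately show "D (to_nat Yo) = ?Cf (to_nat Yo)" using CfY by simp
    qed
    then show "\<exists>Cf. reachable Big C Cf \<and> stable Big (to_nat Yo) Cf \<and> Cf (to_nat Yo) = f x"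
      using RC CfY by blast
  qed
qed

end

definition per_prop :: "nat \<Rightarrow> (nat list \<Rightarrow> int) \<Rightarrow> nat \<Rightarrow> bool" where
  "per_prop d g p \<longleftrightarrow> (\<forall>u v i. length u = d \<longrightarrow> length v = d \<longrightarrow> (\<forall>i<d. u!i mod p = v!i mod p) \<longrightarrow> i < d \<longrightarrow>
      g (u[i := u!i+1]) - g u = g (v[i := v!i+1]) - g v)"

lemma sum_upd:
  fixes grad :: "rat list"
  assumes "length u = d" "i < d"
  shows "(\<Sum>j<d. grad!j * of_nat (u[i := u!i+1] ! j)) = (\<Sum>j<d. grad!j * of_nat (u!j)) + grad!i"
proof -
  have "(\<Sum>j<d. grad!j * of_nat (u[i := u!i+1] ! j)) = (\<Sum>j<d. grad!j * of_nat (u!j) + (if j = i then grad!i else 0))"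
    using assms by (intro sum.cong) (auto simp: nth_list_update algebra_simps)
  also have "\<dots> = (\<Sum>j<d. grad!j * of_nat (u!j)) + grad!i"
    using assms by (simp add: sum.distrib)
  finally show ?thesis .
qed

lemma quilt_per:
  assumes "quilt_affine d g"
  shows "\<exists>p>0. per_prop d g p"
proof -
  obtain p :: nat and grad :: "rat list" and B :: "nat list \<Rightarrow> rat" where p: "p > 0" "length grad = d"
    "\<forall>x. length x = d \<longrightarrow> of_int (g x) = (\<Sum>i<d. grad ! i * of_nat (x ! i)) + B (map (\<lambda>v. v mod p) x)"
    using assms unfolding quilt_affine_def by blast
  have "per_prop d g p" unfolding per_prop_def
  proof (intro allI impI)
    fix u v :: "nat list" and i assume lu: "length u = d" and lv: "length v = d"
      and md: "\<forall>i<d. u!i mod p = v!i mod p" and i: "i < d"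
    let ?u = "u[i := u!i+1]" and ?v = "v[i := v!i+1]"
    have m1: "map (\<lambda>v. v mod p) u = map (\<lambda>v. v mod p) v" using lu lv md by (intro nth_equalityI) auto
    have m2: "map (\<lambda>v. v mod p) ?u = map (\<lambda>v. v mod p) ?v"
    proof (intro nth_equalityI)
      fix j assume "j < length (map (\<lambda>v. v mod p) ?u)"
      then have j: "j < d" using lu by simp
      show "map (\<lambda>v. v mod p) ?u ! j = map (\<lambda>v. v mod p) ?v ! j"
      proof (cases "j = i")
        case True
        have "Suc (u!i) mod p = Suc (v!i) mod p" using md i by (metis mod_Suc_eq)
        then show ?thesis using True lu lv i by simp
      next
        case False then show ?thesis using lu lv j md by simp
      qed
    qed (simp add: lu lv)
    have "(of_int (g ?u - g u) :: rat) = grad!i + B (map (\<lambda>v. v mod p) ?u) - B (map (\<lambda>v. v mod p) u)"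
      using p(3) lu i sum_upd[OF lu i, of grad] by simp
    also have "\<dots> = of_int (g ?v - g v)"
      using p(3) lv i sum_upd[OF lv i, of grad] m1 m2 by simp
    finally show "g ?u - g u = g ?v - g v" by (simp only: of_int_eq_iff)
  qed
  then show ?thesis using p(1) by blast
qed

lemma per_dvd: "per_prop d g p \<Longrightarrow> p dvd P \<Longrightarrow> per_prop d g P"
  unfolding per_prop_def by (metis mod_mod_cancel)

theorem lemma15:
  fixes d :: nat and f :: "nat list \<Rightarrow> nat"
  assumes mono: "nondecreasing d f"
    and minq: "\<exists>gs :: (nat list \<Rightarrow> int) list. \<exists>n :: nat list.
                 gs \<noteq> [] \<and> (\<forall>g\<in>set gs. quilt_affine d g) \<and> length n = d \<and>
                 (\<forall>x. length x = d \<longrightarrow> vle n x \<longrightarrow> int (f x) = Min ((\<lambda>g. g x) ` set gs))"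
    and restr: "\<forall>i<d. \<forall>j::nat. obliviously_computable d (fix_input f i j)"
  shows "obliviously_computable d f"
proof -
  obtain gs :: "(nat list \<Rightarrow> int) list" and n :: "nat list" where
    gs: "gs \<noteq> []" "\<forall>g\<in>set gs. quilt_affine d g" "length n = d"
    "\<forall>x. length x = d \<longrightarrow> vle n x \<longrightarrow> int (f x) = Min ((\<lambda>g. g x) ` set gs)"
    using minq by blast
  have "\<forall>g\<in>set gs. \<exists>p>0. per_prop d g p" using gs(2) quilt_per by blast
  then obtain pf where pf: "\<forall>g\<in>set gs. pf g > 0 \<and> per_prop d g (pf g)" by metis
  define P where "P = (\<Prod>g\<in>set gs. pf g)"
  have Ppos: "P > 0" unfolding P_def using pf by (simp add: prod_pos)
  have Pper: "\<forall>g\<in>set gs. per_prop d g P"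
    using pf per_dvd unfolding P_def by (metis dvd_prodI finite_set)
  have "\<forall>t. \<exists>c :: nat set \<times> reaction set \<times> (nat \<Rightarrow> nat) \<times> nat \<times> nat. fst t < d \<longrightarrow>
      stably_computes (fst c) (fst (snd c)) d (fst (snd (snd c))) (fst (snd (snd (snd c)))) (snd (snd (snd (snd c))))
        (fix_input f (fst t) (snd t)) \<and> output_oblivious (fst (snd c)) (fst (snd (snd (snd c))))"
  proof
    fix t :: "nat \<times> nat"
    show "\<exists>c :: nat set \<times> reaction set \<times> (nat \<Rightarrow> nat) \<times> nat \<times> nat. fst t < d \<longrightarrow>
      stably_computes (fst c) (fst (snd c)) d (fst (snd (snd c))) (fst (snd (snd (snd c)))) (snd (snd (snd (snd c))))
        (fix_input f (fst t) (snd t)) \<and> output_oblivious (fst (snd c)) (fst (snd (snd (snd c))))"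
    proof (cases "fst t < d")
      case True
      then obtain S Rs X Y L where "stably_computes S Rs d X Y L (fix_input f (fst t) (snd t)) \<and> output_oblivious Rs Y"
        using restr unfolding obliviously_computable_def by blast
      then show ?thesis by (intro exI[of _ "(S, Rs, X, Y, L)"]) simp
    qed simp
  qed
  then obtain F :: "nat \<times> nat \<Rightarrow> nat set \<times> reaction set \<times> (nat \<Rightarrow> nat) \<times> nat \<times> nat" where
    F: "\<forall>t. fst t < d \<longrightarrow>
      stably_computes (fst (F t)) (fst (snd (F t))) d (fst (snd (snd (F t)))) (fst (snd (snd (snd (F t))))) (snd (snd (snd (snd (F t)))))
        (fix_input f (fst t) (snd t)) \<and> output_oblivious (fst (snd (F t))) (fst (snd (snd (snd (F t)))))"
    by (rule choice[THEN exE]) blast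
  have "L15 d f gs n P (\<lambda>t. fst (F t)) (\<lambda>t. fst (snd (F t))) (\<lambda>t. fst (snd (snd (F t))))
      (\<lambda>t. fst (snd (snd (snd (F t))))) (\<lambda>t. snd (snd (snd (snd (F t)))))"
  proof
    show "length n = d" by (rule gs(3))
    show "gs \<noteq> []" by (rule gs(1))
    fix g assume "g \<in> set gs"
    then show "nondecreasing d g" using gs(2) unfolding quilt_affine_def by blast
  next
    fix g u v i assume "g \<in> set gs" "length u = d" "length v = d" "\<forall>i<d. u!i mod P = v!i mod P" "i < d"
    then show "g (u[i := u!i+1]) - g u = g (v[i := v!i+1]) - g v"
      using Pper unfolding per_prop_def by blast
  next
    fix x :: "nat list" assume "length x = d" "vle n x"
    then show "int (f x) = Min ((\<lambda>g. g x) ` set gs)" using gs(4) by blast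
  next
    show "nondecreasing d f" by (rule mono)
    show "P > 0" by (rule Ppos)
  next
    fix i j assume "i < d" "j < n!i"
    then show "stably_computes (fst (F (i,j))) (fst (snd (F (i,j)))) d (fst (snd (snd (F (i,j)))))
        (fst (snd (snd (snd (F (i,j)))))) (snd (snd (snd (snd (F (i,j)))))) (fix_input f i j)
       \<and> output_oblivious (fst (snd (F (i,j)))) (fst (snd (snd (snd (F (i,j))))))"
      using F[rule_format, of "(i,j)"] by simp
  qed
  then show ?thesis by (rule L15.main)
qed

end
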